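(* Let $\mathsf{S}$ be a random sprinkle in $d$-dimensional Minkowski spacetime, i.e. the set of points of a Poisson point process with intensity $\rho\cdot\nu$ ($\rho>0$ a constant, $\nu$ the Lebesgue volume measure), equipped with the causal order restricted from Minkowski spacetime. Then, with probability $1$, $\mathsf{S}$ is total locally unsymmetric.
   Context: Minkowski spacetime $\mathbb{M}^d$ is $\mathbb{R}^{d}=\mathbb{R}^{1,d-1}$ with metric $\mathrm{diag}(1,-1,\dots,-1)$, partially ordered by $x\le y$ iff $y-x$ is zero or a future-directed causal vector. For the Poisson process, the number of points in a bounded region $U$ is Poisson distributed with mean $\rho\,\nu(U)$, independently for disjoint regions. Local (un)symmetry: $\ell(X)$ is the cardinality of a longest chain of a poset $X$. A subset $A$ of a poset $X$ is maximally ordered in $X$ if $|\{(a,b)\in A\times A:a<b\}|$ is maximal among subsets of $X$ of cardinality $|A|$. For $\sigma\in\mathrm{Aut}(P)$, $\Sigma(\sigma)=\{a:\sigma(a)\ne a\}$. For a finite poset $Q$ and $r\ge2$: $\sigma$ is a $(Q,r)$-generator if there exist subsets $S_0,\dots,S_{r-1}\subset\Sigma(\sigma)$, each isomorphic to $Q$, which are smallest maximally ordered subsets of $\Sigma(\sigma)$ with $\sigma(S_i)=S_{(i+1)\bmod r}$, $\ell(S_i)=\ell(\Sigma(\sigma))$, $\bigcup_iS_i=\Sigma(\sigma)$; distinct $S_i,S_j$ are $(Q,r)$-symmetric subsets. Elements $a,b$ are $(Q,r,0)$-symmetric if $a=b$; $(Q,r,1)$-symmetric if there are $(Q,r)$-symmetric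 subsets $A,B$ with generator $\sigma$, $a\in A$, $b=\sigma^q(a)\in B$, $1\le q<r$; for $m\ge2$, $(Q,r,m)$-symmetric if not $(Q,r,j)$-symmetric for $j<m$ but there exist $c$, $j<m$ with $a$ $(Q,r,j)$-symmetric to $c$ and $c$ $(Q,r,m-j)$-symmetric to $b$; $(Q,r)$-symmetric if $(Q,r,m)$-symmetric for some $m\ge0$ (an equivalence relation). $P\oslash_rQ$ is the quotient poset of equivalence classes with $E\le F$ iff some $e\in E$, $f\in F$ satisfy $e\le f$. $P$ is locally symmetric if $P\oslash_rQ\not\cong P$ for some finite $Q$ and $r\ge2$, locally unsymmetric otherwise. For $k\in\mathbb{N}_0$, a poset $P$ is $k$-stable locally unsymmetric if for every subset $S\subseteq P$ with $|S|\le k$ the poset $P\setminus S$ (with induced order) is locally unsymmetric. $P$ is total locally unsymmetric if it is $k$-stable locally unsymmetric for every finite $k<|P|$. *)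

theory Defs
  imports "HOL-Probability.Probability" "HOL-Library.Extended_Nat"
begin

definition po_on :: "'a set \<Rightarrow> ('a \<Rightarrow> 'a \<Rightarrow> bool) \<Rightarrow> bool" where
  "po_on X le \<longleftrightarrow> (\<forall>a\<in>X. le a a) \<and>
     (\<forall>a\<in>X. \<forall>b\<in>X. le a b \<and> le b a \<longrightarrow> a = b) \<and>
     (\<forall>a\<in>X. \<forall>b\<in>X. \<forall>c\<in>X. le a b \<and> le b c \<longrightarrow> le a c)"

definition strictly_below :: "('a \<Rightarrow> 'a \<Rightarrow> bool) \<Rightarrow> 'a \<Rightarrow> 'a \<Rightarrow> bool" where
  "strictly_below le a b \<longleftrightarrow> le a b \<and> a \<noteq> b"

definition is_chain :: "('a \<Rightarrow> 'a \<Rightarrow> bool) \<Rightarrow> 'a set \<Rightarrow> bool" where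
  "is_chain le C \<longleftrightarrow> (\<forall>a\<in>C. \<forall>b\<in>C. le a b \<or> le b a)"

definition height :: "'a set \<Rightarrow> ('a \<Rightarrow> 'a \<Rightarrow> bool) \<Rightarrow> enat" where
  "height X le = Sup {enat (card C) | C. C \<subseteq> X \<and> finite C \<and> is_chain le C}"

definition order_iso :: "'a set \<Rightarrow> ('a \<Rightarrow> 'a \<Rightarrow> bool) \<Rightarrow> 'b set \<Rightarrow> ('b \<Rightarrow> 'b \<Rightarrow> bool) \<Rightarrow> bool" where
  "order_iso X le Y le' \<longleftrightarrow> (\<exists>f. bij_betw f X Y \<and> (\<forall>a\<in>X. \<forall>b\<in>X. le a b \<longleftrightarrow> le' (f a) (f b)))"

definition automorphism :: "'a set \<Rightarrow> ('a \<Rightarrow> 'a \<Rightarrow> bool) \<Rightarrow> ('a \<Rightarrow> 'a) \<Rightarrow> bool" where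
  "automorphism X le \<sigma> \<longleftrightarrow> bij_betw \<sigma> X X \<and> (\<forall>a\<in>X. \<forall>b\<in>X. le a b \<longleftrightarrow> le (\<sigma> a) (\<sigma> b))"

definition moved :: "'a set \<Rightarrow> ('a \<Rightarrow> 'a) \<Rightarrow> 'a set" where
  "moved X \<sigma> = {a \<in> X. \<sigma> a \<noteq> a}"

definition ordered_pairs :: "('a \<Rightarrow> 'a \<Rightarrow> bool) \<Rightarrow> 'a set \<Rightarrow> ('a \<times> 'a) set" where
  "ordered_pairs le A = {(a, b) \<in> A \<times> A. strictly_below le a b}"

definition max_ordered :: "'a set \<Rightarrow> ('a \<Rightarrow> 'a \<Rightarrow> bool) \<Rightarrow> 'a set \<Rightarrow> bool" where
  "max_ordered X le A \<longleftrightarrow> A \<subseteq> X \<and> finite A \<and>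
     (\<forall>B. B \<subseteq> X \<and> finite B \<and> card B = card A \<longrightarrow>
          card (ordered_pairs le B) \<le> card (ordered_pairs le A))"

definition smallest_max_ordered :: "'a set \<Rightarrow> ('a \<Rightarrow> 'a \<Rightarrow> bool) \<Rightarrow> 'a set \<Rightarrow> bool" where
  "smallest_max_ordered X le A \<longleftrightarrow>
     max_ordered X le A \<and> height A le = height X le \<and>
     (\<forall>B. max_ordered X le B \<and> height B le = height X le \<longrightarrow> card A \<le> card B)"

text \<open>Finite posets Q are represented on subsets of nat (every finite poset is isomorphic
  to one of these). The family Sf 0, ..., Sf (r-1) witnesses that sigma is a (Q,r)-generator.\<close>
definition generator_family ::
  "'a set \<Rightarrow> ('a \<Rightarrow> 'a \<Rightarrow> bool) \<Rightarrow> nat set \<Rightarrow> (nat \<Rightarrow> nat \<Rightarrow> bool) \<Rightarrow> nat \<Rightarrow> ('a \<Rightarrow> 'a) \<Rightarrow> (nat \<Rightarrow> 'a set) \<Rightarrow> bool" where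
  "generator_family X le Qc Qle r \<sigma> Sf \<longleftrightarrow>
     automorphism X le \<sigma> \<and>
     (\<forall>i<r. Sf i \<subseteq> moved X \<sigma> \<and> order_iso (Sf i) le Qc Qle \<and>
            smallest_max_ordered (moved X \<sigma>) le (Sf i) \<and>
            \<sigma> ` (Sf i) = Sf ((i + 1) mod r) \<and>
            height (Sf i) le = height (moved X \<sigma>) le) \<and>
     (\<Union>i<r. Sf i) = moved X \<sigma>"

definition is_generator ::
  "'a set \<Rightarrow> ('a \<Rightarrow> 'a \<Rightarrow> bool) \<Rightarrow> nat set \<Rightarrow> (nat \<Rightarrow> nat \<Rightarrow> bool) \<Rightarrow> nat \<Rightarrow> ('a \<Rightarrow> 'a) \<Rightarrow> bool" where
  "is_generator X le Qc Qle r \<sigma> \<longleftrightarrow> (\<exists>Sf. generator_family X le Qc Qle r \<sigma> Sf)"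

definition symmetric_subsets ::
  "'a set \<Rightarrow> ('a \<Rightarrow> 'a \<Rightarrow> bool) \<Rightarrow> nat set \<Rightarrow> (nat \<Rightarrow> nat \<Rightarrow> bool) \<Rightarrow> nat \<Rightarrow> ('a \<Rightarrow> 'a) \<Rightarrow> 'a set \<Rightarrow> 'a set \<Rightarrow> bool" where
  "symmetric_subsets X le Qc Qle r \<sigma> A B \<longleftrightarrow>
     (\<exists>Sf. generator_family X le Qc Qle r \<sigma> Sf \<and>
        (\<exists>i<r. \<exists>j<r. A = Sf i \<and> B = Sf j \<and> A \<noteq> B))"

definition sym1 ::
  "'a set \<Rightarrow> ('a \<Rightarrow> 'a \<Rightarrow> bool) \<Rightarrow> nat set \<Rightarrow> (nat \<Rightarrow> nat \<Rightarrow> bool) \<Rightarrow> nat \<Rightarrow> 'a \<Rightarrow> 'a \<Rightarrow> bool" where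
  "sym1 X le Qc Qle r a b \<longleftrightarrow>
     (\<exists>\<sigma> A B q. symmetric_subsets X le Qc Qle r \<sigma> A B \<and> a \<in> A \<and>
        1 \<le> q \<and> q < r \<and> b = (\<sigma> ^^ q) a \<and> b \<in> B)"

function symm ::
  "'a set \<Rightarrow> ('a \<Rightarrow> 'a \<Rightarrow> bool) \<Rightarrow> nat set \<Rightarrow> (nat \<Rightarrow> nat \<Rightarrow> bool) \<Rightarrow> nat \<Rightarrow> nat \<Rightarrow> 'a \<Rightarrow> 'a \<Rightarrow> bool" where
  "symm X le Qc Qle r m a b =
     (if m = 0 then a = b
      else if m = 1 then sym1 X le Qc Qle r a b
      else (\<forall>j\<in>{..<m}. \<not> symm X le Qc Qle r j a b) \<and>
           (\<exists>j\<in>{1..<m}. \<exists>c. symm X le Qc Qle r j a c \<and> symm X le Qc Qle r (m - j) c b))"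
  by pat_completeness auto
termination
  by (relation "Wellfounded.measure (\<lambda>(X, le, Qc, Qle, r, m, a, b). m)") auto

definition qr_symmetric ::
  "'a set \<Rightarrow> ('a \<Rightarrow> 'a \<Rightarrow> bool) \<Rightarrow> nat set \<Rightarrow> (nat \<Rightarrow> nat \<Rightarrow> bool) \<Rightarrow> nat \<Rightarrow> 'a \<Rightarrow> 'a \<Rightarrow> bool" where
  "qr_symmetric X le Qc Qle r a b \<longleftrightarrow> (\<exists>m. symm X le Qc Qle r m a b)"

definition quot_carrier ::
  "'a set \<Rightarrow> ('a \<Rightarrow> 'a \<Rightarrow> bool) \<Rightarrow> nat set \<Rightarrow> (nat \<Rightarrow> nat \<Rightarrow> bool) \<Rightarrow> nat \<Rightarrow> 'a set set" where
  "quot_carrier X le Qc Qle r = (\<lambda>a. {b \<in> X. qr_symmetric X le Qc Qle r a b}) ` X"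

definition quot_le :: "('a \<Rightarrow> 'a \<Rightarrow> bool) \<Rightarrow> 'a set \<Rightarrow> 'a set \<Rightarrow> bool" where
  "quot_le le E F \<longleftrightarrow> (\<exists>e\<in>E. \<exists>f\<in>F. le e f)"

definition locally_symmetric :: "'a set \<Rightarrow> ('a \<Rightarrow> 'a \<Rightarrow> bool) \<Rightarrow> bool" where
  "locally_symmetric X le \<longleftrightarrow>
     (\<exists>Qc Qle r. finite Qc \<and> po_on Qc Qle \<and> r \<ge> 2 \<and>
        \<not> order_iso (quot_carrier X le Qc Qle r) (quot_le le) X le)"

definition locally_unsymmetric :: "'a set \<Rightarrow> ('a \<Rightarrow> 'a \<Rightarrow> bool) \<Rightarrow> bool" where
  "locally_unsymmetric X le \<longleftrightarrow> \<not> locally_symmetric X le"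

definition stable_locally_unsymmetric :: "nat \<Rightarrow> 'a set \<Rightarrow> ('a \<Rightarrow> 'a \<Rightarrow> bool) \<Rightarrow> bool" where
  "stable_locally_unsymmetric k X le \<longleftrightarrow>
     (\<forall>S. S \<subseteq> X \<and> finite S \<and> card S \<le> k \<longrightarrow> locally_unsymmetric (X - S) le)"

definition total_locally_unsymmetric :: "'a set \<Rightarrow> ('a \<Rightarrow> 'a \<Rightarrow> bool) \<Rightarrow> bool" where
  "total_locally_unsymmetric X le \<longleftrightarrow>
     (\<forall>k::nat. (infinite X \<or> k < card X) \<longrightarrow> stable_locally_unsymmetric k X le)"

text \<open>Points of d-dimensional Minkowski spacetime, d = 1 + DIM('b), are pairs (time, space).
  x \<le> y iff y - x is zero or future-directed causal.\<close>
definition causal_le :: "real \<times> 'b::euclidean_space \<Rightarrow> real \<times> 'b \<Rightarrow> bool" where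
  "causal_le x y \<longleftrightarrow> norm (snd y - snd x) \<le> fst y - fst x"

definition poisson_point_process ::
  "'w measure \<Rightarrow> real \<Rightarrow> ('w \<Rightarrow> (real \<times> 'b::euclidean_space) set) \<Rightarrow> bool" where
  "poisson_point_process M \<rho> S \<longleftrightarrow>
     prob_space M \<and>
     (\<forall>U \<in> sets lborel. bounded U \<longrightarrow>
        (AE \<omega> in M. finite (S \<omega> \<inter> U)) \<and>
        (\<forall>k::nat. {\<omega> \<in> space M. card (S \<omega> \<inter> U) = k} \<in> sets M \<and>
           measure M {\<omega> \<in> space M. card (S \<omega> \<inter> U) = k} =
             exp (- (\<rho> * measure lborel U)) * (\<rho> * measure lborel U) ^ k / fact k)) \<and>
     (\<forall>(I :: nat set) (U :: nat \<Rightarrow> (real \<times> 'b) set).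
        finite I \<longrightarrow> (\<forall>i\<in>I. U i \<in> sets lborel \<and> bounded (U i)) \<longrightarrow> disjoint_family_on U I \<longrightarrow>
        prob_space.indep_vars M (\<lambda>_. count_space UNIV) (\<lambda>i \<omega>. card (S \<omega> \<inter> U i)) I)"

end

theory Submission
  imports Defs
begin


declare symm.simps[simp del]

lemma sym1_false:
  assumes dist: "\<And>a b. a \<in> X \<Longrightarrow> b \<in> X \<Longrightarrow> a \<noteq> b \<Longrightarrow> infinite {c\<in>X. \<not>(le c a \<longleftrightarrow> le c b)}"
    and fin: "finite Qc"
  shows "\<not> sym1 X le Qc Qle r a b"
proof
  assume "sym1 X le Qc Qle r a b"
  then obtain \<sigma> A B q where ss: "symmetric_subsets X le Qc Qle r \<sigma> A B" and aA: "a \<in> A"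
    unfolding sym1_def by blast
  then obtain Sf i where gf: "generator_family X le Qc Qle r \<sigma> Sf" and i: "i < r" "A = Sf i"
    unfolding symmetric_subsets_def by blast
  note G = gf[unfolded generator_family_def]
  have aut: "automorphism X le \<sigma>" using G by (rule conjunct1)
  have G2: "\<forall>i<r. Sf i \<subseteq> moved X \<sigma> \<and> order_iso (Sf i) le Qc Qle \<and>
            smallest_max_ordered (moved X \<sigma>) le (Sf i) \<and>
            \<sigma> ` (Sf i) = Sf ((i + 1) mod r) \<and>
            height (Sf i) le = height (moved X \<sigma>) le" using G by (rule conjunct1[OF conjunct2])
  have finS: "finite (Sf j)" if "j < r" for j
  proof -
    have "order_iso (Sf j) le Qc Qle" using G2 that by simp
    then obtain f where "bij_betw f (Sf j) Qc" unfolding order_iso_def by blast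
    then show ?thesis using fin bij_betw_finite by blast
  qed
  have mv: "moved X \<sigma> = (\<Union>j<r. Sf j)" using G by (metis conjunct2)
  have finm: "finite (moved X \<sigma>)" unfolding mv using finS by auto
  have am: "a \<in> moved X \<sigma>" using aA i mv by blast
  then have aX: "a \<in> X" and ne: "\<sigma> a \<noteq> a" unfolding moved_def by simp_all
  have bij: "bij_betw \<sigma> X X" and pres: "\<forall>x\<in>X. \<forall>y\<in>X. le x y \<longleftrightarrow> le (\<sigma> x) (\<sigma> y)"
    using aut unfolding automorphism_def by (rule conjunct1, rule conjunct2)
  have sX: "\<sigma> a \<in> X" by (rule bij_betw_apply[OF bij aX])
  have "{c\<in>X. \<not>(le c a \<longleftrightarrow> le c (\<sigma> a))} \<subseteq> moved X \<sigma>"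
  proof
    fix c assume c: "c \<in> {c\<in>X. \<not>(le c a \<longleftrightarrow> le c (\<sigma> a))}"
    show "c \<in> moved X \<sigma>"
    proof (rule ccontr)
      assume "c \<notin> moved X \<sigma>"
      then have sc: "\<sigma> c = c" using c unfolding moved_def by auto
      have cX: "c \<in> X" using c by simp
      have "le c a \<longleftrightarrow> le (\<sigma> c) (\<sigma> a)" using pres cX aX by blast
      then show False using sc c by simp
    qed
  qed
  then have "finite {c\<in>X. \<not>(le c a \<longleftrightarrow> le c (\<sigma> a))}" using finite_subset finm by auto
  moreover have "a \<noteq> \<sigma> a" using ne by simp
  ultimately show False using dist[OF aX sX] by simp
qed

lemma symm_false:
  assumes dist: "\<And>a b. a \<in> X \<Longrightarrow> b \<in> X \<Longrightarrow> a \<noteq> b \<Longrightarrow> infinite {c\<in>X. \<not>(le c a \<longleftrightarrow> le c b)}"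
    and fin: "finite Qc"
  shows "m \<ge> 1 \<Longrightarrow> \<not> symm X le Qc Qle r m a b"
proof (induction m arbitrary: a b rule: less_induct)
  case (less m)
  show ?case
  proof (cases "m = 1")
    case True
    have "symm X le Qc Qle r m a b = sym1 X le Qc Qle r a b" using True by (subst symm.simps) simp
    then show ?thesis using sym1_false[where X=X and le=le and Qle=Qle and r=r, OF dist fin] by simp
  next
    case False
    have "\<not> symm X le Qc Qle r j a c" if "j \<in> {1..<m}" for j c
      using less.IH[of j] that by auto
    then show ?thesis using False less.prems by (subst symm.simps) auto
  qed
qed

lemma qr_sym_iff:
  assumes dist: "\<And>a b. a \<in> X \<Longrightarrow> b \<in> X \<Longrightarrow> a \<noteq> b \<Longrightarrow> infinite {c\<in>X. \<not>(le c a \<longleftrightarrow> le c b)}"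
    and fin: "finite Qc"
  shows "qr_symmetric X le Qc Qle r a b \<longleftrightarrow> a = b"
proof
  assume "qr_symmetric X le Qc Qle r a b"
  then obtain m where m: "symm X le Qc Qle r m a b" unfolding qr_symmetric_def by blast
  show "a = b"
  proof (cases "m = 0")
    case True then show ?thesis using m by (subst (asm) symm.simps) simp
  next
    case False then show ?thesis using m symm_false[where X=X and le=le and Qle=Qle and r=r and m=m, OF dist fin] by simp
  qed
next
  assume "a = b"
  then show "qr_symmetric X le Qc Qle r a b" unfolding qr_symmetric_def
    by (intro exI[of _ 0]) (subst symm.simps, simp)
qed

lemma loc_unsym:
  assumes dist: "\<And>a b. a \<in> X \<Longrightarrow> b \<in> X \<Longrightarrow> a \<noteq> b \<Longrightarrow> infinite {c\<in>X. \<not>(le c a \<longleftrightarrow> le c b)}"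
  shows "locally_unsymmetric X le"
  unfolding locally_unsymmetric_def locally_symmetric_def
proof clarify
  fix Qc :: "nat set" and Qle r
  assume fin: "finite Qc" and no: "\<not> order_iso (quot_carrier X le Qc Qle r) (quot_le le) X le"
  have qc: "quot_carrier X le Qc Qle r = (\<lambda>a. {a}) ` X"
  proof -
    have eq: "\<And>a. {b \<in> X. qr_symmetric X le Qc Qle r a b} = {b\<in>X. a = b}"
      using qr_sym_iff[where X=X and le=le and Qle=Qle and r=r, OF dist fin] by blast
    show ?thesis unfolding quot_carrier_def eq by (rule image_cong) auto
  qed
  have B: "bij_betw the_elem ((\<lambda>a. {a}) ` X) X"
  proof -
    have "inj_on the_elem ((\<lambda>a. {a}) ` X)" by (auto simp: inj_on_def)
    moreover have "the_elem ` ((\<lambda>a. {a}) ` X) = X" by (simp add: image_image)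
    ultimately show ?thesis by (simp add: bij_betw_def)
  qed
  have P: "\<forall>E\<in>(\<lambda>a. {a}) ` X. \<forall>F\<in>(\<lambda>a. {a}) ` X. quot_le le E F \<longleftrightarrow> le (the_elem E) (the_elem F)"
    by (auto simp: quot_le_def)
  have "order_iso (quot_carrier X le Qc Qle r) (quot_le le) X le"
    unfolding qc order_iso_def by (rule exI[of _ the_elem]) (use B P in blast)
  then show False using no by blast
qed

lemma total_unsym:
  assumes dist: "\<And>a b. a \<in> X \<Longrightarrow> b \<in> X \<Longrightarrow> a \<noteq> b \<Longrightarrow> infinite {c\<in>X. \<not>(le c a \<longleftrightarrow> le c b)}"
  shows "total_locally_unsymmetric X le"
  unfolding total_locally_unsymmetric_def stable_locally_unsymmetric_def
proof clarify
  fix k F assume F: "F \<subseteq> X" "finite F"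
  show "locally_unsymmetric (X - F) le"
  proof (rule loc_unsym)
    fix a b assume ab: "a \<in> X - F" "b \<in> X - F" "a \<noteq> b"
    have "{c\<in>X. \<not>(le c a \<longleftrightarrow> le c b)} \<subseteq> {c\<in>X - F. \<not>(le c a \<longleftrightarrow> le c b)} \<union> F" by auto
    moreover have "infinite {c\<in>X. \<not>(le c a \<longleftrightarrow> le c b)}" using dist[of a b] ab by blast
    ultimately show "infinite {c\<in>X - F. \<not>(le c a \<longleftrightarrow> le c b)}"
      using F(2) by (meson finite_UnI finite_subset)
  qed
qed


definition sproj :: "'b::euclidean_space \<Rightarrow> real \<times> 'b \<Rightarrow> real" where
  "sproj e x = fst x - snd x \<bullet> e"

definition tube :: "real \<times> 'b::euclidean_space \<Rightarrow> real \<Rightarrow> 'b \<Rightarrow> (real \<times> 'b) set" where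
  "tube z r e = (\<Union>k::nat. ball (z - (3 * r * real k) *\<^sub>R (1, e)) r)"

lemma not_le_if_sproj:
  fixes e :: "'b::euclidean_space"
  assumes "norm e = 1" "sproj e c > sproj e a"
  shows "\<not> causal_le c a"
proof
  assume "causal_le c a"
  then have h: "norm (snd a - snd c) \<le> fst a - fst c" unfolding causal_le_def .
  have "(snd a - snd c) \<bullet> e \<le> norm (snd a - snd c) * norm e" by (rule norm_cauchy_schwarz)
  then have "(snd a - snd c) \<bullet> e \<le> fst a - fst c" using h assms(1) by simp
  then show False using assms(2) unfolding sproj_def by (simp add: inner_diff_left)
qed

lemma tube_sub:
  fixes e :: "'b::euclidean_space"
  assumes e: "norm e = 1" and r: "0 < r" "8 * r \<le> \<delta>"
    and sd: "sproj e b - sproj e a = 2 * \<delta>"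
    and z: "dist z (b - (\<delta>, 0)) < r"
    and y: "y \<in> tube z r e"
  shows "causal_le y b \<and> \<not> causal_le y a"
proof -
  obtain k :: nat where yk: "y \<in> ball (z - (3 * r * real k) *\<^sub>R (1, e)) r"
    using y unfolding tube_def by blast
  define t where "t = 3 * r * real k"
  have t0: "t \<ge> 0" using r unfolding t_def by simp
  define c0 where "c0 = b - (\<delta>, 0)"
  define h where "h = y + t *\<^sub>R (1, e) - c0"
  have "h = (y - (z - t *\<^sub>R (1, e))) + (z - c0)" unfolding h_def by (simp add: algebra_simps)
  then have "norm h \<le> norm (y - (z - t *\<^sub>R (1, e))) + norm (z - c0)"
    using norm_triangle_ineq by metis
  moreover have "norm (y - (z - t *\<^sub>R (1, e))) < r" using yk unfolding t_def by (simp add: dist_norm norm_minus_commute)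
  moreover have "norm (z - c0) < r" using z unfolding c0_def by (simp add: dist_norm)
  ultimately have hn: "norm h < 2 * r" by linarith
  have f1: "\<bar>fst h\<bar> \<le> norm h" using norm_fst_le[of "fst h" "snd h"] by simp
  have f2: "norm (snd h) \<le> norm h" using norm_snd_le[of "snd h" "fst h"] by simp
  have f3: "\<bar>snd h \<bullet> e\<bar> \<le> norm (snd h)" using Cauchy_Schwarz_ineq2[of "snd h" e] e by simp
  have yfst: "fst y = fst b - \<delta> + fst h - t" unfolding h_def c0_def by simp
  have ysnd: "snd y = snd b + snd h - t *\<^sub>R e" unfolding h_def c0_def by simp
  have "norm (snd b - snd y) = norm (t *\<^sub>R e - snd h)" unfolding ysnd by (simp add: algebra_simps)
  also have "\<dots> \<le> norm (t *\<^sub>R e) + norm (snd h)" by (rule norm_triangle_ineq4)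
  also have "\<dots> = t + norm (snd h)" using t0 e by simp
  finally have "norm (snd b - snd y) \<le> fst b - fst y"
    using yfst f1 f2 hn r by linarith
  then have le: "causal_le y b" unfolding causal_le_def .
  have "sproj e y = sproj e b - \<delta> + fst h - snd h \<bullet> e"
  proof -
    have ee: "e \<bullet> e = 1" using e by (simp add: power2_norm_eq_inner[symmetric])
    show ?thesis unfolding sproj_def yfst ysnd
      by (simp add: inner_diff_left inner_add_left ee)
  qed
  then have "sproj e y > sproj e a" using sd f1 f2 f3 hn r by linarith
  then have "\<not> causal_le y a" using not_le_if_sproj[OF e] by blast
  then show ?thesis using le by blast
qed

lemma sproj_exists:
  fixes a b :: "real \<times> 'b::euclidean_space"
  assumes "a \<noteq> b"
  shows "\<exists>e\<in>Basis \<union> uminus ` Basis. sproj e a \<noteq> sproj e b"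
proof (cases "snd a = snd b")
  case True
  then have "fst a \<noteq> fst b" using assms by (simp add: prod_eq_iff)
  moreover obtain i :: 'b where i: "i \<in> Basis" using nonempty_Basis by blast
  ultimately show ?thesis using True by (intro bexI[of _ i]) (auto simp: sproj_def)
next
  case False
  then obtain i :: 'b where i: "i \<in> Basis" "(snd a - snd b) \<bullet> i \<noteq> 0"
    by (metis euclidean_all_zero_iff right_minus_eq)
  show ?thesis
  proof (rule ccontr)
    assume "\<not> ?thesis"
    then have "sproj i a = sproj i b" "sproj (-i) a = sproj (-i) b" using i by auto
    then show False using i(2) unfolding sproj_def by (simp add: inner_diff_left)
  qed
qed



lemma poisson_tail_lim:
  fixes c :: real
  assumes c: "c > 0"
  shows "(\<lambda>n::nat. \<Sum>k\<le>N. exp (- (c * real n)) * (c * real n) ^ k / fact k) \<longlonglongrightarrow> 0"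
proof (rule tendsto_null_sum)
  fix k assume "k \<in> {..N}"
  have lim: "filterlim (\<lambda>n::nat. c * real n) at_top sequentially"
    by (rule filterlim_tendsto_pos_mult_at_top[OF tendsto_const c filterlim_real_sequentially])
  have "((\<lambda>n::nat. (c * real n) ^ k / exp (c * real n)) \<longlongrightarrow> 0) sequentially"
    using filterlim_compose[OF tendsto_power_div_exp_0 lim] by simp
  then have "((\<lambda>n::nat. (c * real n) ^ k / exp (c * real n) / fact k) \<longlongrightarrow> 0 / fact k) sequentially"
    by (intro tendsto_divide) auto
  then show "((\<lambda>n::nat. exp (- (c * real n)) * (c * real n) ^ k / fact k) \<longlongrightarrow> 0) sequentially"
    by (simp add: exp_minus field_simps)
qed

lemma tube_infinite:
  fixes S :: "'w \<Rightarrow> (real \<times> 'b::euclidean_space) set" and e :: 'b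
  assumes rho: "\<rho> > 0" and pp: "poisson_point_process M \<rho> S" and r: "r > 0"
  shows "AE \<omega> in M. infinite (S \<omega> \<inter> tube z r e)"
proof -
  have ps: "prob_space M" using pp unfolding poisson_point_process_def by blast
  interpret prob_space M by (rule ps)
  have P: "\<And>U. U \<in> sets lborel \<Longrightarrow> bounded U \<Longrightarrow> (\<forall>k::nat. {\<omega> \<in> space M. card (S \<omega> \<inter> U) = k} \<in> sets M \<and>
           measure M {\<omega> \<in> space M. card (S \<omega> \<inter> U) = k} =
             exp (- (\<rho> * measure lborel U)) * (\<rho> * measure lborel U) ^ k / fact k)"
    using pp unfolding poisson_point_process_def by blast
  define p where "p k = z - (3 * r * real k) *\<^sub>R (1::real, e)" for k :: nat
  define B where "B k = ball (p k) r" for k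
  define U where "U n = (\<Union>k\<in>{..<n}. B k)" for n
  define v where "v = measure lborel (ball (0 :: real \<times> 'b) r)"
  have v: "v > 0" unfolding v_def using content_ball_pos[OF r] .
  have Bv: "measure lborel (B k) = v" for k
    unfolding B_def v_def using content_ball_conv_unit_ball[of r "p k"] content_ball_conv_unit_ball[of r "0::real \<times> 'b"] r
    by simp
  have n1: "norm (1::real, e) \<ge> 1" using norm_fst_le[of "1::real" e] by simp
  have disj: "disjoint_family_on B UNIV"
    unfolding disjoint_family_on_def
  proof (intro ballI impI)
    fix j k :: nat assume jk: "j \<noteq> k"
    show "B j \<inter> B k = {}"
    proof (rule ccontr)
      assume "B j \<inter> B k \<noteq> {}"
      then obtain x where "dist (p j) x < r" "dist (p k) x < r" unfolding B_def by auto
      then have d: "dist (p j) (p k) < 2 * r" using dist_triangle[of "p j" "p k" x] dist_commute[of x "p k"]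
        by linarith
      have eq: "p j - p k = (3 * r * (real k - real j)) *\<^sub>R (1::real, e)"
        unfolding p_def by (simp add: algebra_simps)
      have "dist (p j) (p k) = norm ((3 * r * (real k - real j)) *\<^sub>R (1::real, e))"
        using eq by (simp only: dist_norm)
      also have "\<dots> = \<bar>3 * r * (real k - real j)\<bar> * norm (1::real, e)" by (rule norm_scaleR)
      also have "\<dots> = 3 * r * \<bar>real k - real j\<bar> * norm (1::real, e)" using r by (simp add: abs_mult)
      finally have "dist (p j) (p k) = 3 * r * \<bar>real k - real j\<bar> * norm (1::real, e)" .
      moreover have kj: "\<bar>real k - real j\<bar> \<ge> 1" using jk by linarith
      have m: "1 * 1 \<le> \<bar>real k - real j\<bar> * norm (1::real, e)"
        by (rule mult_mono[OF kj n1]) auto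
      have "3 * r * (1 * 1) \<le> 3 * r * (\<bar>real k - real j\<bar> * norm (1::real, e))"
        by (rule mult_left_mono[OF m]) (use r in simp)
      ultimately have "dist (p j) (p k) \<ge> 3 * r" by (simp add: mult.assoc)
      then show False using d r by linarith
    qed
  qed
  have Usets: "U n \<in> sets lborel" for n unfolding U_def B_def by simp
  have Ubd: "bounded (U n)" for n unfolding U_def B_def by (intro bounded_UN) auto
  have Umeas: "measure lborel (U n) = real n * v" for n
  proof -
    have "measure lborel (U n) = (\<Sum>k\<in>{..<n}. measure lborel (B k))"
      unfolding U_def
    proof (rule measure_finite_Union)
      show "disjoint_family_on B {..<n}" using disj by (rule disjoint_family_on_mono[rotated]) auto
      show "emeasure lborel (B k) \<noteq> \<infinity>" for k
        using emeasure_lborel_ball_finite[of "p k" r] unfolding B_def by simp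
    qed (auto simp: B_def)
    then show ?thesis using Bv by simp
  qed
  have Utube: "U n \<subseteq> tube z r e" for n
    unfolding U_def B_def p_def tube_def by auto
  define A where "A N = {\<omega> \<in> space M. \<forall>n. card (S \<omega> \<inter> U n) \<le> N}" for N
  have Aeq: "A N = (\<Inter>n. \<Union>k\<in>{..N}. {\<omega> \<in> space M. card (S \<omega> \<inter> U n) = k})" for N
    unfolding A_def by auto
  have Ale: "{\<omega> \<in> space M. card (S \<omega> \<inter> U n) \<le> N} = (\<Union>k\<in>{..N}. {\<omega> \<in> space M. card (S \<omega> \<inter> U n) = k})" for n N
    by auto
  have Ak: "{\<omega> \<in> space M. card (S \<omega> \<inter> U n) = k} \<in> sets M" for n k
    using P[OF Usets Ubd] by blast
  have Aset: "A N \<in> sets M" for N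
    unfolding Aeq by (intro sets.countable_INT sets.finite_UN) (auto intro: Ak)
  have A0: "emeasure M (A N) = 0" for N
  proof -
    have bound: "measure M (A N) \<le> (\<Sum>k\<le>N. exp (- ((\<rho> * v) * real n)) * ((\<rho> * v) * real n) ^ k / fact k)" for n
    proof -
      have "A N \<subseteq> (\<Union>k\<in>{..N}. {\<omega> \<in> space M. card (S \<omega> \<inter> U n) = k})" unfolding A_def by auto
      then have "measure M (A N) \<le> measure M (\<Union>k\<in>{..N}. {\<omega> \<in> space M. card (S \<omega> \<inter> U n) = k})"
        by (intro finite_measure_mono) (auto intro: Ak)
      also have "\<dots> \<le> (\<Sum>k\<le>N. measure M {\<omega> \<in> space M. card (S \<omega> \<inter> U n) = k})"
        by (rule measure_UNION_le) (auto intro: Ak)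
      also have "\<dots> = (\<Sum>k\<le>N. exp (- ((\<rho> * v) * real n)) * ((\<rho> * v) * real n) ^ k / fact k)"
        using P[OF Usets Ubd] Umeas by (simp add: algebra_simps)
      finally show ?thesis .
    qed
    have "measure M (A N) \<le> 0"
      by (rule LIMSEQ_le_const[OF poisson_tail_lim[of "\<rho> * v" N]]) (use rho v bound in auto)
    then have "measure M (A N) = 0" using measure_nonneg[of M "A N"] by linarith
    then show ?thesis by (simp add: emeasure_eq_measure)
  qed
  have "AE \<omega> in M. \<omega> \<notin> A N" for N
    by (rule AE_I[of _ _ "A N"]) (auto simp: A0 Aset)
  then have "AE \<omega> in M. \<forall>N. \<omega> \<notin> A N" by (simp add: AE_all_countable)
  from this AE_space show ?thesis
  proof eventually_elim
    case (elim \<omega>)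
    then have om: "\<omega> \<in> space M" and nA: "\<forall>N. \<omega> \<notin> A N" by auto
    show "infinite (S \<omega> \<inter> tube z r e)"
    proof
      assume fin: "finite (S \<omega> \<inter> tube z r e)"
      have "card (S \<omega> \<inter> U n) \<le> card (S \<omega> \<inter> tube z r e)" for n
        using Utube fin by (intro card_mono) auto
      then have "\<omega> \<in> A (card (S \<omega> \<inter> tube z r e))" unfolding A_def using om by auto
      then show False using nA by blast
    qed
  qed
qed



lemma dist_inf_or:
  fixes X :: "(real \<times> 'b::euclidean_space) set"
  assumes D: "\<And>Y. open Y \<Longrightarrow> Y \<noteq> {} \<Longrightarrow> \<exists>d\<in>D. d \<in> Y"
    and H: "\<forall>i\<in>D \<times> (UNIV::nat set) \<times> (Basis \<union> uminus ` (Basis::'b set)).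
              infinite (X \<inter> tube (fst i) (1 / real (Suc (fst (snd i)))) (snd (snd i)))"
    and e: "e \<in> Basis \<union> uminus ` Basis" and lt: "sproj e a < sproj e b"
  shows "infinite {c\<in>X. causal_le c b \<and> \<not> causal_le c a}"
proof -
  have ne: "norm e = 1" using e by auto
  define \<delta> where "\<delta> = (sproj e b - sproj e a) / 2"
  have d0: "\<delta> > 0" using lt unfolding \<delta>_def by simp
  obtain n :: nat where n: "inverse (real (Suc n)) < \<delta> / 8" using reals_Archimedean[of "\<delta>/8"] d0 by auto
  define r where "r = 1 / real (Suc n)"
  have r0: "r > 0" unfolding r_def by simp
  have r8: "8 * r \<le> \<delta>" using n unfolding r_def by (simp add: field_simps)
  obtain z where zD: "z \<in> D" and zb: "z \<in> ball (b - (\<delta>, 0)) r"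
    using D[of "ball (b - (\<delta>, 0)) r"] r0 by auto
  have inf: "infinite (X \<inter> tube z r e)" using H zD e unfolding r_def by force
  have "X \<inter> tube z r e \<subseteq> {c\<in>X. causal_le c b \<and> \<not> causal_le c a}"
  proof
    fix y assume y: "y \<in> X \<inter> tube z r e"
    have "dist z (b - (\<delta>, 0)) < r" using zb by (simp add: dist_commute)
    then have "causal_le y b \<and> \<not> causal_le y a"
      using tube_sub[OF ne r0 r8 _ _, of b a z y] y unfolding \<delta>_def by simp
    then show "y \<in> {c\<in>X. causal_le c b \<and> \<not> causal_le c a}" using y by blast
  qed
  then show ?thesis using inf finite_subset by blast
qed

theorem mainTheorem15:
  fixes M :: "'w measure" and \<rho> :: real and S :: "'w \<Rightarrow> (real \<times> 'b::euclidean_space) set"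
  assumes "\<rho> > 0"
    and "poisson_point_process M \<rho> S"
  shows "AE \<omega> in M. total_locally_unsymmetric (S \<omega>) causal_le"
proof -
  obtain D :: "(real \<times> 'b) set" where D: "countable D" "\<And>X. open X \<Longrightarrow> X \<noteq> {} \<Longrightarrow> \<exists>d\<in>D. d \<in> X"
    by (rule countable_dense_setE) blast
  define I where "I = D \<times> (UNIV::nat set) \<times> (Basis \<union> uminus ` (Basis::'b set))"
  have cI: "countable I" unfolding I_def using D(1)
    by (intro countable_SIGMA) (auto intro: countable_finite)
  have "AE \<omega> in M. \<forall>i\<in>I. infinite (S \<omega> \<inter> tube (fst i) (1 / real (Suc (fst (snd i)))) (snd (snd i)))"
    by (subst AE_ball_countable[OF cI]) (auto intro: tube_infinite[OF assms])
  then show ?thesis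
  proof (rule eventually_mono)
    fix \<omega> assume H: "\<forall>i\<in>I. infinite (S \<omega> \<inter> tube (fst i) (1 / real (Suc (fst (snd i)))) (snd (snd i)))"
    show "total_locally_unsymmetric (S \<omega>) causal_le"
    proof (rule total_unsym)
      fix a b assume ab: "a \<in> S \<omega>" "b \<in> S \<omega>" "a \<noteq> b"
      obtain e where e: "e \<in> Basis \<union> uminus ` Basis" and ne: "sproj e a \<noteq> sproj e b"
        using sproj_exists[OF ab(3)] by blast
      show "infinite {c\<in>S \<omega>. \<not>(causal_le c a \<longleftrightarrow> causal_le c b)}"
      proof (cases "sproj e a < sproj e b")
        case True
        have "infinite {c\<in>S \<omega>. causal_le c b \<and> \<not> causal_le c a}"
          by (rule dist_inf_or[OF D(2) H[unfolded I_def] e True])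
        moreover have "{c\<in>S \<omega>. causal_le c b \<and> \<not> causal_le c a} \<subseteq> {c\<in>S \<omega>. \<not>(causal_le c a \<longleftrightarrow> causal_le c b)}" by auto
        ultimately show ?thesis using finite_subset by blast
      next
        case False
        then have lt2: "sproj e b < sproj e a" using ne by linarith
        have "infinite {c\<in>S \<omega>. causal_le c a \<and> \<not> causal_le c b}"
          by (rule dist_inf_or[OF D(2) H[unfolded I_def] e lt2])
        moreover have "{c\<in>S \<omega>. causal_le c a \<and> \<not> causal_le c b} \<subseteq> {c\<in>S \<omega>. \<not>(causal_le c a \<longleftrightarrow> causal_le c b)}" by auto
        ultimately show ?thesis using finite_subset by blast
      qed
    qed
  qed
qed

end
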